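(* Let $d\in\mathbb{Z}$ with $d>1$ and let $A\subseteq\mathbb{R}^2$ be finite and $d$-regular. Then \[ |\mathcal{N}_d(A,\emptyset,\mathbb{R}^2)|\geq\frac{1}{(2^{d+3})!}|A|^{\binom{d+2}{2}-3}. \]
   Context: For $k\in\mathbb{Z}^+$, a curve of degree $k$ is the zero set in $\mathbb{R}^2$ of a polynomial in $\mathbb{R}[x,y]$ of degree exactly $k$; $\mathcal{C}_k$ is the family of such curves and $\mathcal{C}_{\le k}:=\bigcup_{j=1}^k\mathcal{C}_j$. A finite set $A\subseteq\mathbb{R}^2$ is $d$-regular if $|A\cap C|<2^{-2^{3d+8}}|A|$ for all $C\in\mathcal{C}_{\le d}$. For $k\in\mathbb{Z}^+$ let $I_k=\{(i,j)\in\mathbb{Z}_{\ge 0}^2: 1\le i+j\le k\}$ and $\psi_k:\mathbb{R}^2\to\mathbb{R}^{\binom{k+2}{2}-1}$, $\psi_k(a_1,a_2)=(a_1^ia_2^j)_{(i,j)\in I_k}$; for $S\subseteq\mathbb{R}^N$, $\dim S$ is the dimension of its affine hull ($\dim\emptyset=-1$). $\mathcal{N}_d(A)$ is the family of $B\subseteq A$ with $|B|=\binom{d+2}{2}-3$ such that: (a) $\dim\psi_d(B)=\binom{d+2}{2}-4$; (b) for all $e\in\{1,\dots,d-1\}$ and $C\in\mathcal{C}_e$, $|B\cap C|<\binom{d+2}{2}-\binom{d-e+2}{2}$; (c) for all $e\in\{1,\dots,d-1\}$ and $C\in\mathcal{C}_e$ with $|B\cap C|=\binom{d+2}{2}-\binom{d-e+2}{2}-1$,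 $\dim\psi_{d-e}(B\setminus C)=\binom{d-e+2}{2}-3$; (d) for all $e\in\{1,\dots,d-1\}$ and $C\in\mathcal{C}_e$ with $|B\cap C|<\binom{d+2}{2}-\binom{d-e+2}{2}-1$, $\dim\psi_{d-e}(B\setminus C)>\binom{d-e+2}{2}-3$. For $B_0,C_0\subseteq\mathbb{R}^2$, $\mathcal{N}_d(A,B_0,C_0):=\{E\in\mathcal{N}_d(A): B_0\subseteq E\text{ and }E\cap C_0=E\setminus B_0\}$ (so $\mathcal{N}_d(A,\emptyset,\mathbb{R}^2)=\mathcal{N}_d(A)$). *)

theory Defs
  imports Complex_Main
begin

type_synonym pt = "real \<times> real"

definition poly_eval2 :: "nat \<Rightarrow> (nat \<Rightarrow> nat \<Rightarrow> real) \<Rightarrow> pt \<Rightarrow> real" where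
  "poly_eval2 k c p = (\<Sum>i\<le>k. \<Sum>j\<le>k - i. c i j * fst p ^ i * snd p ^ j)"

definition has_degree2 :: "nat \<Rightarrow> (nat \<Rightarrow> nat \<Rightarrow> real) \<Rightarrow> bool" where
  "has_degree2 k c \<longleftrightarrow> (\<forall>i j. k < i + j \<longrightarrow> c i j = 0) \<and> (\<exists>i j. i + j = k \<and> c i j \<noteq> 0)"

definition curves :: "nat \<Rightarrow> pt set set" where
  "curves k = {{p. poly_eval2 k c p = 0} | c. has_degree2 k c}"

definition regular :: "nat \<Rightarrow> pt set \<Rightarrow> bool" where
  "regular d A \<longleftrightarrow> (\<forall>e\<in>{1..d}. \<forall>C\<in>curves e.
      real (card (A \<inter> C)) < (1/2) ^ (2 ^ (3*d+8)) * real (card A))"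

definition Iset :: "nat \<Rightarrow> (nat \<times> nat) set" where
  "Iset k = {(i,j). 1 \<le> i + j \<and> i + j \<le> k}"

definition psi :: "nat \<Rightarrow> pt \<Rightarrow> (nat \<times> nat) \<Rightarrow> real" where
  "psi k p = (\<lambda>(i,j). if (i,j) \<in> Iset k then fst p ^ i * snd p ^ j else 0)"

definition aff_indep_psi :: "nat \<Rightarrow> pt set \<Rightarrow> bool" where
  "aff_indep_psi k T \<longleftrightarrow> (\<forall>u :: pt \<Rightarrow> real.
      (\<Sum>t\<in>T. u t) = 0 \<and> (\<forall>ij\<in>Iset k. (\<Sum>t\<in>T. u t * psi k t ij) = 0)
        \<longrightarrow> (\<forall>t\<in>T. u t = 0))"

text \<open>Dimension of the affine hull of psi_k(B), for finite B (= -1 for B empty):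
  the maximal size of an affinely independent subset minus one.\<close>
definition psi_dim :: "nat \<Rightarrow> pt set \<Rightarrow> int" where
  "psi_dim k B = (if B = {} then -1
     else Max {int (card T) - 1 | T. T \<subseteq> B \<and> T \<noteq> {} \<and> aff_indep_psi k T})"

abbreviation bn :: "nat \<Rightarrow> int" where
  "bn k \<equiv> int ((k + 2) choose 2)"

definition Nfam :: "nat \<Rightarrow> pt set \<Rightarrow> pt set set" where
  "Nfam d A = {B. B \<subseteq> A \<and> int (card B) = bn d - 3
     \<and> psi_dim d B = bn d - 4
     \<and> (\<forall>e\<in>{1..d-1}. \<forall>C\<in>curves e. int (card (B \<inter> C)) < bn d - bn (d-e))
     \<and> (\<forall>e\<in>{1..d-1}. \<forall>C\<in>curves e. int (card (B \<inter> C)) = bn d - bn (d-e) - 1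
           \<longrightarrow> psi_dim (d-e) (B - C) = bn (d-e) - 3)
     \<and> (\<forall>e\<in>{1..d-1}. \<forall>C\<in>curves e. int (card (B \<inter> C)) < bn d - bn (d-e) - 1
           \<longrightarrow> psi_dim (d-e) (B - C) > bn (d-e) - 3)}"

definition Nfam3 :: "nat \<Rightarrow> pt set \<Rightarrow> pt set \<Rightarrow> pt set \<Rightarrow> pt set set" where
  "Nfam3 d A B0 C0 = {E \<in> Nfam d A. B0 \<subseteq> E \<and> E \<inter> C0 = E - B0}"

end

theory Submission
  imports Defs
begin


lemma kernel_exists:
  fixes f :: "'j \<Rightarrow> 'a \<Rightarrow> real"
  assumes "finite J" "finite X" "card J < card X"
  shows "\<exists>x. (\<exists>a\<in>X. x a \<noteq> 0) \<and> (\<forall>j\<in>J. (\<Sum>a\<in>X. f j a * x a) = 0)"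
  using assms
proof (induction J arbitrary: X f rule: finite_induct)
  case empty
  then obtain a where "a \<in> X" by fastforce
  then show ?case by (rule_tac x="\<lambda>_. 1" in exI) auto
next
  case (insert j0 J)
  show ?case
  proof (cases "\<forall>a\<in>X. f j0 a = 0")
    case True
    from insert obtain x where x: "\<exists>a\<in>X. x a \<noteq> 0" "\<forall>j\<in>J. (\<Sum>a\<in>X. f j a * x a) = 0"
      by (metis Suc_lessD card_insert_disjoint)
    then show ?thesis using True by (rule_tac x=x in exI) auto
  next
    case False
    then obtain a0 where a0: "a0 \<in> X" "f j0 a0 \<noteq> 0" by blast
    define g where "g j a = f j a - f j a0 / f j0 a0 * f j0 a" for j a
    have cX: "card J < card (X - {a0})" using insert a0 by auto
    from insert.IH[OF _ cX, of g] insert.prems obtain y where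
      y: "\<exists>a\<in>X - {a0}. y a \<noteq> 0" "\<forall>j\<in>J. (\<Sum>a\<in>X - {a0}. g j a * y a) = 0" by auto
    define S0 where "S0 = (\<Sum>a\<in>X - {a0}. f j0 a * y a)"
    define x where "x = y(a0 := - S0 / f j0 a0)"
    have sx: "(\<Sum>a\<in>X. h a * x a) = h a0 * x a0 + (\<Sum>a\<in>X - {a0}. h a * y a)" for h
    proof -
      have "(\<Sum>a\<in>X. h a * x a) = h a0 * x a0 + (\<Sum>a\<in>X - {a0}. h a * x a)"
        using a0 insert.prems by (simp add: sum.remove)
      moreover have "(\<Sum>a\<in>X - {a0}. h a * x a) = (\<Sum>a\<in>X - {a0}. h a * y a)"
        by (rule sum.cong) (auto simp: x_def)
      ultimately show ?thesis by simp
    qed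
    have "\<exists>a\<in>X. x a \<noteq> 0" using y(1) by (auto simp: x_def)
    moreover have "(\<Sum>a\<in>X. f j a * x a) = 0" if "j \<in> insert j0 J" for j
    proof (cases "j = j0")
      case True
      show ?thesis unfolding True sx[of "f j0"] using a0 by (simp add: x_def S0_def)
    next
      case False
      with that have jJ: "j \<in> J" by auto
      have "(\<Sum>a\<in>X - {a0}. g j a * y a) = (\<Sum>a\<in>X - {a0}. f j a * y a) - f j a0 / f j0 a0 * S0"
        by (simp add: g_def S0_def algebra_simps sum_subtractf sum_distrib_left)
      with y(2) jJ have "(\<Sum>a\<in>X - {a0}. f j a * y a) = f j a0 / f j0 a0 * S0" by auto
      then show ?thesis unfolding sx[of "f j"] using a0 by (simp add: x_def)
    qed
    ultimately show ?thesis by blast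
  qed
qed

lemma square_dep:
  fixes M :: "'t \<Rightarrow> 'v \<Rightarrow> real"
  assumes "finite T" "finite V" "card V \<le> card T" "v0 \<in> V" "c v0 \<noteq> 0"
    and "\<forall>t\<in>T. (\<Sum>v\<in>V. c v * M t v) = 0"
  shows "\<exists>u. (\<exists>t\<in>T. u t \<noteq> 0) \<and> (\<forall>v\<in>V. (\<Sum>t\<in>T. u t * M t v) = 0)"
proof -
  have "card (V - {v0}) < card T" using assms
    by (metis card_Diff1_less le_trans less_le_not_le nat_le_linear)
  from kernel_exists[OF _ assms(1) this, of "\<lambda>v t. M t v"] assms(2)
  obtain u where u: "\<exists>t\<in>T. u t \<noteq> 0" "\<forall>v\<in>V - {v0}. (\<Sum>t\<in>T. M t v * u t) = 0" by auto
  have "c v0 * (\<Sum>t\<in>T. u t * M t v0) = (\<Sum>t\<in>T. u t * (c v0 * M t v0))"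
    by (simp add: sum_distrib_left algebra_simps)
  also have "\<dots> = (\<Sum>t\<in>T. u t * (- (\<Sum>v\<in>V - {v0}. c v * M t v)))"
  proof (rule sum.cong)
    fix t assume "t \<in> T"
    then have "(\<Sum>v\<in>V. c v * M t v) = 0" using assms by auto
    then have "c v0 * M t v0 + (\<Sum>v\<in>V - {v0}. c v * M t v) = 0"
      using assms by (simp add: sum.remove)
    then show "u t * (c v0 * M t v0) = u t * (- (\<Sum>v\<in>V - {v0}. c v * M t v))" by (metis add_eq_0_iff2 mult_minus_right)
  qed simp
  also have "\<dots> = - (\<Sum>v\<in>V - {v0}. c v * (\<Sum>t\<in>T. M t v * u t))"
    by (simp add: sum_distrib_left sum_negf algebra_simps sum.swap[of _ T])
  also have "\<dots> = 0" using u(2) by simp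
  finally have "(\<Sum>t\<in>T. u t * M t v0) = 0" using assms(5) by simp
  then show ?thesis using u by (rule_tac x=u in exI) (auto simp: mult.commute)
qed



definition Mon :: "nat \<Rightarrow> (nat \<times> nat) set" where "Mon k = {(i,j). i + j \<le> k}"
definition mnm :: "nat \<times> nat \<Rightarrow> pt \<Rightarrow> real" where
  "mnm ij p = fst p ^ fst ij * snd p ^ snd ij"

lemma Mon_Sigma: "Mon k = Sigma {..k} (\<lambda>i. {..k - i})"
  by (auto simp: Mon_def)

lemma finite_Mon[simp]: "finite (Mon k)"
  by (simp add: Mon_Sigma)

lemma two_choose: "2 * ((k + 2) choose 2) = (k + 2) * (k + 1)"
proof -
  have "even ((k + 2) * (k + 1))" by simp
  then show ?thesis by (simp add: choose_two)
qed

lemma choose2_aux: "2 * (A::nat) = (k + 2) * (k + 1) \<Longrightarrow> 2 * B = (Suc k + 2) * (Suc k + 1) \<Longrightarrow> B = A + (k + 2)"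
  by (simp add: algebra_simps)

lemma choose2_Suc: "(Suc k + 2) choose 2 = ((k + 2) choose 2) + (k + 2)"
proof -
  define A where "A = (k+2) choose 2"
  define B where "B = (Suc k + 2) choose 2"
  have "2*A = (k+2)*(k+1)" unfolding A_def by (rule two_choose)
  moreover have "2*B = (Suc k+2)*(Suc k+1)" unfolding B_def by (rule two_choose)
  ultimately have "B = A + (k+2)" by (rule choose2_aux)
  then show ?thesis by (simp only: A_def B_def)
qed

lemma card_Mon: "card (Mon k) = (k + 2) choose 2"
proof (induction k)
  case 0
  have "Mon 0 = {(0,0)}" by (auto simp: Mon_def)
  then show ?case using two_choose[of 0] by simp
next
  case (Suc k)
  have eq: "Mon (Suc k) = Mon k \<union> (\<lambda>i. (i, Suc k - i)) ` {..Suc k}"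
    by (auto simp: Mon_def image_iff)
  have disj: "Mon k \<inter> (\<lambda>i. (i, Suc k - i)) ` {..Suc k} = {}"
    by (auto simp: Mon_def)
  have inj: "inj_on (\<lambda>i. (i, Suc k - i)) {..Suc k}" by (auto simp: inj_on_def)
  have "card (Mon (Suc k)) = card (Mon k) + card ((\<lambda>i. (i, Suc k - i)) ` {..Suc k})"
    unfolding eq by (rule card_Un_disjoint) (use disj in auto)
  also have "\<dots> = ((k + 2) choose 2) + (k + 2)" using Suc inj by (simp add: card_image)
  finally show ?case using choose2_Suc[of k] by linarith
qed

lemma poly_eval2_Mon:
  "poly_eval2 k c p = (\<Sum>ij\<in>Mon k. c (fst ij) (snd ij) * mnm ij p)"
  unfolding poly_eval2_def Mon_Sigma mnm_def
  by (simp add: sum.Sigma mult.assoc split_def)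

lemma Mon_Iset: "Mon k = insert (0,0) (Iset k)" "(0,0) \<notin> Iset k"
  by (auto simp: Mon_def Iset_def)

lemma indep_iff:
  "finite T \<Longrightarrow> aff_indep_psi k T \<longleftrightarrow>
    (\<forall>u. (\<forall>ij\<in>Mon k. (\<Sum>t\<in>T. u t * mnm ij t) = 0) \<longrightarrow> (\<forall>t\<in>T. u t = 0))"
proof -
  have "(\<forall>ij\<in>Mon k. (\<Sum>t\<in>T. u t * mnm ij t) = 0) \<longleftrightarrow>
        ((\<Sum>t\<in>T. u t) = 0 \<and> (\<forall>ij\<in>Iset k. (\<Sum>t\<in>T. u t * psi k t ij) = 0))" for u
  proof -
    have "(\<Sum>t\<in>T. u t * psi k t ij) = (\<Sum>t\<in>T. u t * mnm ij t)" if "ij \<in> Iset k" for ij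
      using that by (auto simp: psi_def mnm_def split_def intro!: sum.cong)
    then show ?thesis unfolding Mon_Iset(1) by (auto simp: mnm_def)
  qed
  then show ?thesis unfolding aff_indep_psi_def by auto
qed

lemma indep_single: "aff_indep_psi k {p}"
  unfolding aff_indep_psi_def by simp

lemma indep_empty: "aff_indep_psi k {}"
  unfolding aff_indep_psi_def by simp

lemma curve_dep:
  assumes "C \<in> curves e" "finite T" "T \<subseteq> C" "card T \<ge> (e + 2) choose 2"
  shows "\<not> aff_indep_psi e T"
proof -
  from assms(1) obtain c where c: "has_degree2 e c" and C: "C = {p. poly_eval2 e c p = 0}"
    by (auto simp: curves_def)
  from c obtain i0 j0 where ij0: "i0 + j0 = e" "c i0 j0 \<noteq> 0" by (auto simp: has_degree2_def)
  define c' where "c' ij = c (fst ij) (snd ij)" for ij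
  have z: "\<forall>t\<in>T. (\<Sum>ij\<in>Mon e. c' ij * mnm ij t) = 0"
    using assms(3) C by (auto simp: c'_def poly_eval2_Mon)
  have c1: "card (Mon e) \<le> card T" using assms(4) by (simp add: card_Mon)
  have c2: "(i0,j0) \<in> Mon e" using ij0 by (simp add: Mon_def)
  have c3: "c' (i0,j0) \<noteq> 0" using ij0 by (simp add: c'_def)
  obtain u where "\<exists>t\<in>T. u t \<noteq> 0" "\<forall>ij\<in>Mon e. (\<Sum>t\<in>T. u t * mnm ij t) = 0"
    using square_dep[OF assms(2) finite_Mon c1 c2 c3 z] by blast
  then show ?thesis using indep_iff[OF assms(2)] by blast
qed



lemma curve_exists:
  assumes fin: "finite S" and ne: "S \<noteq> {}" and ind: "aff_indep_psi k S"
    and cS: "card S < (k + 2) choose 2"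
  shows "\<exists>e\<in>{1..k}. \<exists>C\<in>curves e. \<forall>p. \<not> aff_indep_psi k (insert p S) \<longrightarrow> p \<in> C"
proof -
  from kernel_exists[of S "Mon k" "\<lambda>s ij. mnm ij s"] fin cS
  obtain c0 where c0: "\<exists>ij\<in>Mon k. c0 ij \<noteq> 0" "\<forall>s\<in>S. (\<Sum>ij\<in>Mon k. mnm ij s * c0 ij) = 0"
    by (auto simp: card_Mon)
  define P where "P t = (\<Sum>ij\<in>Mon k. c0 ij * mnm ij t)" for t
  have P0: "P s = 0" if "s \<in> S" for s
    using c0(2) that by (simp add: P_def mult.commute)
  have key: "P p = 0" if nind: "\<not> aff_indep_psi k (insert p S)" for p
  proof -
    have finI: "finite (insert p S)" using fin by simp
    from nind obtain u where u: "\<forall>ij\<in>Mon k. (\<Sum>t\<in>insert p S. u t * mnm ij t) = 0"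
      and ut: "\<exists>t\<in>insert p S. u t \<noteq> 0"
      unfolding indep_iff[OF finI] by blast
    have pS: "p \<notin> S" using nind ind by (metis insert_absorb)
    have up: "u p \<noteq> 0"
    proof
      assume "u p = 0"
      then have "\<forall>ij\<in>Mon k. (\<Sum>t\<in>S. u t * mnm ij t) = 0" using u pS fin by simp
      then have "\<forall>t\<in>S. u t = 0" using ind unfolding indep_iff[OF fin] by blast
      then show False using ut \<open>u p = 0\<close> by auto
    qed
    have "0 = (\<Sum>ij\<in>Mon k. c0 ij * (\<Sum>t\<in>insert p S. u t * mnm ij t))" using u by simp
    also have "\<dots> = (\<Sum>t\<in>insert p S. u t * P t)"
      unfolding P_def by (simp add: sum_distrib_left sum.swap[of _ "Mon k"] algebra_simps)
    also have "\<dots> = u p * P p" using pS fin P0 by simp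
    finally show ?thesis using up by simp
  qed
  define D where "D = {ij\<in>Mon k. c0 ij \<noteq> 0}"
  have finD: "finite D" and neD: "D \<noteq> {}" using c0(1) by (auto simp: D_def)
  define e where "e = Max ((\<lambda>ij. fst ij + snd ij) ` D)"
  have De: "fst ij + snd ij \<le> e" if "ij \<in> D" for ij
    unfolding e_def using finD that by simp
  obtain ij0 where ij0: "ij0 \<in> D" "fst ij0 + snd ij0 = e"
    unfolding e_def using finD neD by (metis (no_types, lifting) Max_in finite_imageI image_iff image_is_empty)
  have ek: "e \<le> k" using ij0 by (auto simp: D_def Mon_def)
  define c where "c i j = (if (i,j) \<in> Mon k then c0 (i,j) else 0)" for i j
  have c_zero: "c i j = 0" if "(i,j) \<notin> D" for i j
    using that by (auto simp: c_def D_def)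
  have PD: "P t = (\<Sum>ij\<in>D. c0 ij * mnm ij t)" for t
    unfolding P_def by (rule sum.mono_neutral_right) (auto simp: D_def)
  have deg: "has_degree2 e c"
    unfolding has_degree2_def
  proof
    show "\<forall>i j. e < i + j \<longrightarrow> c i j = 0"
      using De c_zero by (metis fst_conv snd_conv not_le)
    show "\<exists>i j. i + j = e \<and> c i j \<noteq> 0"
      using ij0 by (rule_tac x="fst ij0" in exI, rule_tac x="snd ij0" in exI) (auto simp: c_def D_def)
  qed
  have DMon: "D \<subseteq> Mon e" using De by (auto simp: Mon_def)
  have ev: "poly_eval2 e c p = P p" for p
    unfolding poly_eval2_Mon PD
    by (rule sum.mono_neutral_cong_right[OF finite_Mon DMon]) (auto simp: c_def D_def)
  have e1: "e \<ge> 1"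
  proof (rule ccontr)
    assume "\<not> e \<ge> 1"
    then have "e = 0" by simp
    then have "D = {(0,0)}" using De neD by fastforce
    then have "c0 (0,0) \<noteq> 0" "P s = c0 (0,0)" for s by (auto simp: PD D_def mnm_def)
    then show False using P0 ne by auto
  qed
  have "{p. poly_eval2 e c p = 0} \<in> curves e" using deg by (auto simp: curves_def)
  moreover have "\<forall>p. \<not> aff_indep_psi k (insert p S) \<longrightarrow> p \<in> {p. poly_eval2 e c p = 0}"
    using key ev by simp
  ultimately have X: "\<exists>C\<in>curves e. \<forall>p. \<not> aff_indep_psi k (insert p S) \<longrightarrow> p \<in> C" by blast
  have "e \<in> {1..k}" using e1 ek by simp
  then show ?thesis using X by blast
qed



definition gen :: "nat \<Rightarrow> pt set \<Rightarrow> bool" where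
  "gen d B \<longleftrightarrow> (\<forall>k\<in>{1..d}. \<forall>T\<subseteq>B. card T \<le> (k + 2) choose 2 \<longrightarrow> aff_indep_psi k T)"

lemma psi_dim_set_finite:
  "finite B \<Longrightarrow> finite {int (card T) - 1 | T. T \<subseteq> B \<and> T \<noteq> {} \<and> aff_indep_psi k T}"
  by (rule finite_subset[of _ "(\<lambda>T. int (card T) - 1) ` Pow B"]) auto

lemma psi_dim_ge:
  assumes "finite B" "T \<subseteq> B" "T \<noteq> {}" "aff_indep_psi k T"
  shows "psi_dim k B \<ge> int (card T) - 1"
proof -
  have "B \<noteq> {}" using assms by auto
  then show ?thesis unfolding psi_dim_def using psi_dim_set_finite[OF assms(1), of k] assms
    by (auto intro!: Max_ge)
qed

lemma psi_dim_indep: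
  assumes "finite B" "B \<noteq> {}" "aff_indep_psi k B"
  shows "psi_dim k B = int (card B) - 1"
proof -
  have "Max {int (card T) - 1 | T. T \<subseteq> B \<and> T \<noteq> {} \<and> aff_indep_psi k T} = int (card B) - 1"
  proof (rule Max_eqI[OF psi_dim_set_finite[OF assms(1)]])
    show "y \<le> int (card B) - 1" if "y \<in> {int (card T) - 1 | T. T \<subseteq> B \<and> T \<noteq> {} \<and> aff_indep_psi k T}" for y
      using that assms(1) by (auto dest: card_mono)
    show "int (card B) - 1 \<in> {int (card T) - 1 | T. T \<subseteq> B \<and> T \<noteq> {} \<and> aff_indep_psi k T}"
      using assms by auto
  qed
  then show ?thesis using assms(2) by (simp add: psi_dim_def)
qed

lemma n_ge3: "k \<ge> 1 \<Longrightarrow> (k + 2) choose 2 \<ge> 3"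
proof -
  assume "k \<ge> 1"
  then have "(k + 2) * (k + 1) \<ge> 3 * 2" by (intro mult_mono) auto
  then show ?thesis using two_choose[of k] by linarith
qed

lemma arith_b:
  assumes "1 \<le> e" "e < d"
  shows "int ((e + 2) choose 2) - 1 < int ((d + 2) choose 2) - int ((d - e + 2) choose 2)"
proof -
  obtain f where f: "d = e + f" "f \<ge> 1" using assms by (metis le_add_diff_inverse less_imp_le_nat less_diff_conv2 add.commute linorder_not_le not_less_eq_eq plus_1_eq_Suc)
  have def: "d - e = f" using f by simp
  have ef: "e * f \<ge> 1" using assms f by simp
  have h1: "2 * int ((e + 2) choose 2) = (int e + 2) * (int e + 1)"
    using arg_cong[OF two_choose[of e], of int] by (simp add: algebra_simps)
  have h2: "2 * int ((d + 2) choose 2) = (int e + int f + 2) * (int e + int f + 1)"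
    using arg_cong[OF two_choose[of d], of int] f by (simp add: algebra_simps)
  have h3: "2 * int ((f + 2) choose 2) = (int f + 2) * (int f + 1)"
    using arg_cong[OF two_choose[of f], of int] by (simp add: algebra_simps)
  have ef': "int e * int f \<ge> 1" using ef by (metis of_nat_1 of_nat_le_iff of_nat_mult)
  show ?thesis unfolding def using h1 h2 h3 ef' by (simp add: algebra_simps)
qed

lemma gen_Nfam:
  assumes d: "d > 1" and finA: "finite A" and BA: "B \<subseteq> A"
    and cB: "card B = ((d + 2) choose 2) - 3" and g: "gen d B"
  shows "B \<in> Nfam d A"
proof -
  have finB: "finite B" using finA BA finite_subset by auto
  have nd3: "(d + 2) choose 2 \<ge> 3" using d n_ge3 by simp
  have nd6: "(d + 2) choose 2 \<ge> 6"
  proof -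
    have "(d + 2) * (d + 1) \<ge> 4 * 3" using d by (intro mult_mono) auto
    then show ?thesis using two_choose[of d] by linarith
  qed
  have cBi: "int (card B) = bn d - 3" using cB nd3 by simp
  have Bne: "B \<noteq> {}" using cB nd6 by auto
  have indB: "aff_indep_psi d B" using g d cB unfolding gen_def by auto
  have pa: "psi_dim d B = bn d - 4" using psi_dim_indep[OF finB Bne indB] cBi by simp
  have cap: "int (card (B \<inter> C)) \<le> int ((e + 2) choose 2) - 1"
    if e: "e \<in> {1..d-1}" and C: "C \<in> curves e" for e C
  proof (rule ccontr)
    assume "\<not> ?thesis"
    then have "(e + 2) choose 2 \<le> card (B \<inter> C)" by simp
    then obtain T where T: "T \<subseteq> B \<inter> C" "card T = (e + 2) choose 2" "finite T"
      by (rule obtain_subset_with_card_n)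
    have "aff_indep_psi e T" using g e T unfolding gen_def by auto
    moreover have "\<not> aff_indep_psi e T" using curve_dep[OF C T(3)] T by auto
    ultimately show False by blast
  qed
  have pb: "int (card (B \<inter> C)) < bn d - bn (d-e)" if e: "e \<in> {1..d-1}" and C: "C \<in> curves e" for e C
    using cap[OF e C] arith_b[of e d] e d by force
  have cdiff: "int (card (B - C)) = int (card B) - int (card (B \<inter> C))" for C
  proof -
    have "card B = card (B \<inter> C) + card (B - C)"
      using finB by (metis card_Un_disjoint Int_Diff_Un Int_Diff_disjoint finite_Diff finite_Int)
    then show ?thesis by simp
  qed
  have kd: "d - e \<in> {1..d}" "d - e \<ge> 1" if "e \<in> {1..d-1}" for e using that by auto
  have pc: "psi_dim (d-e) (B - C) = bn (d-e) - 3"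
    if e: "e \<in> {1..d-1}" and C: "C \<in> curves e" and eq: "int (card (B \<inter> C)) = bn d - bn (d-e) - 1" for e C
  proof -
    have c1: "int (card (B - C)) = bn (d-e) - 2" using cdiff[of C] eq cBi by simp
    have n3: "(d - e + 2) choose 2 \<ge> 3" using n_ge3 kd[OF e] by simp
    have "card (B - C) \<noteq> 0" using c1 n3 by linarith
    then have ne: "B - C \<noteq> {}" by (metis card.empty)
    have "card (B - C) \<le> (d - e + 2) choose 2" using c1 by simp
    then have "aff_indep_psi (d-e) (B - C)" using g kd[OF e] unfolding gen_def by auto
    then show ?thesis using psi_dim_indep[OF _ ne] finB c1 by simp
  qed
  have pd: "psi_dim (d-e) (B - C) > bn (d-e) - 3"
    if e: "e \<in> {1..d-1}" and C: "C \<in> curves e" and lt: "int (card (B \<inter> C)) < bn d - bn (d-e) - 1" for e C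
  proof -
    have c1: "int (card (B - C)) \<ge> bn (d-e) - 1" using cdiff[of C] lt cBi by simp
    have n3: "(d - e + 2) choose 2 \<ge> 3" using n_ge3 kd[OF e] by simp
    have "((d - e + 2) choose 2) - 1 \<le> card (B - C)" using c1 by simp
    then obtain T where T: "T \<subseteq> B - C" "card T = ((d - e + 2) choose 2) - 1" "finite T"
      by (rule obtain_subset_with_card_n)
    have ne: "T \<noteq> {}" using T n3 by auto
    have "T \<subseteq> B" "card T \<le> (d - e + 2) choose 2" using T by auto
    then have "aff_indep_psi (d-e) T" using g kd[OF e] unfolding gen_def by blast
    from psi_dim_ge[OF _ T(1) ne this] finB have "psi_dim (d-e) (B - C) \<ge> int (card T) - 1" by simp
    then show ?thesis using T(2) n3 by simp
  qed
  show ?thesis unfolding Nfam_def using BA cBi pa pb pc pd by blast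
qed



lemma reg_curve:
  assumes "regular d A" "e \<in> {1..d}" "C \<in> curves e"
  shows "real (card (A \<inter> C)) < (1/2) ^ (2 ^ (3*d+8)) * real (card A)"
  using assms unfolding regular_def by blast

lemma line_curve: "{p. fst p = fst a0} \<in> curves 1"
proof -
  define c :: "nat \<Rightarrow> nat \<Rightarrow> real" where
    "c i j = (if i = 1 \<and> j = 0 then 1 else if i = 0 \<and> j = 0 then - fst a0 else 0)" for i j
  have deg: "has_degree2 1 c" unfolding has_degree2_def c_def by auto
  have "poly_eval2 1 c p = fst p - fst a0" for p
    by (simp add: poly_eval2_def c_def atMost_Suc)
  then have "{p. fst p = fst a0} = {p. poly_eval2 1 c p = 0}" by auto
  then show ?thesis using deg unfolding curves_def by blast
qed

lemma A_large:
  assumes "regular d A" "finite A" "d \<ge> 1"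
  shows "real (card A) > 2 ^ (2 ^ (3*d+8))"
proof -
  define N :: nat where "N = 2 ^ (3*d+8)"
  have one: "1 \<in> {1..d}" using assms by simp
  have A0: "A \<noteq> {}"
  proof
    assume "A = {}"
    then show False using reg_curve[OF assms(1) one line_curve[of "(0,0)"]] by simp
  qed
  then obtain a0 where a0: "a0 \<in> A" by auto
  have "A \<inter> {p. fst p = fst a0} \<noteq> {}" using a0 by auto
  then have "card (A \<inter> {p. fst p = fst a0}) \<ge> 1" using assms(2)
    by (simp add: Suc_leI card_gt_0_iff)
  then have "1 < (1/2) ^ N * real (card A)"
    using reg_curve[OF assms(1) one line_curve[of a0]] unfolding N_def by linarith
  then have "1 < real (card A) / 2 ^ N" by (simp add: power_one_over)
  then show ?thesis unfolding N_def by (simp add: field_simps)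
qed

lemma H_bound: "(d + 2) * (d + 1) \<le> (2::nat) ^ (d + 3)"
proof (induction d)
  case 0
  then show ?case by simp
next
  case (Suc d)
  have "d + 2 < 2 ^ (d + 2)" by (rule less_exp)
  then have "(Suc d + 2) * (Suc d + 1) = (d + 2) * (d + 1) + 2 * (d + 2)" by (simp add: algebra_simps)
  also have "\<dots> \<le> 2 ^ (d + 3) + 2 ^ (d + 3)"
  proof -
    have p: "(2::nat) ^ (d + 3) = 8 * 2 ^ d" "(2::nat) ^ (d + 2) = 4 * 2 ^ d" by (simp_all add: power_add)
    have aux: "X \<le> 8 * P \<Longrightarrow> y < 4 * P \<Longrightarrow> X + 2 * y \<le> 8 * P + 8 * P" for X y P :: nat by linarith
    show ?thesis using Suc.IH \<open>d + 2 < 2 ^ (d + 2)\<close> unfolding p by (rule aux)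
  qed
  also have "\<dots> = 2 ^ (Suc d + 3)" by (simp add: power_add)
  finally show ?case .
qed

lemma nd_bound: "2 * ((d + 2) choose 2) \<le> (2::nat) ^ (d + 3)"
  using H_bound two_choose by metis

lemma fact_double: "2 ^ m * fact m \<le> (fact (2 * m) :: nat)"
proof (induction m)
  case 0
  then show ?case by simp
next
  case (Suc m)
  have "2 ^ Suc m * fact (Suc m) = 2 * Suc m * (2 ^ m * fact m)" by (simp add: algebra_simps)
  also have "\<dots> \<le> 2 * Suc m * fact (2 * m)" by (rule mult_left_mono[OF Suc.IH]) simp
  also have "\<dots> \<le> (2 * m + 2) * (2 * m + 1) * fact (2 * m)" by simp
  also have "\<dots> = fact (2 * Suc m)" by (simp add: algebra_simps)
  finally show ?case .
qed



lemma num_bounds: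
  assumes "i < (d + 2) choose 2"
  shows "4 * d * 2 ^ i \<le> (2::nat) ^ (2 ^ (3*d+8))" "4 * i \<le> (2::nat) ^ (2 ^ (3*d+8))"
proof -
  define N :: nat where "N = 2 ^ (3*d+8)"
  have p3: "(2::nat) ^ (d + 3) = 2 * 2 ^ (d + 2)" by (simp add: power_add)
  have i: "i < 2 ^ (d + 2)" using nd_bound[of d] assms unfolding p3 by linarith
  have d: "d < 2 ^ d" by (rule less_exp)
  have d2: "d + 2 < 2 ^ (d + 2)" by (rule less_exp)
  have mono3: "(2::nat) ^ (d + 4) \<le> N" unfolding N_def by (rule power_increasing) auto
  have "(2::nat) ^ (d + 4) = 4 * 2 ^ (d + 2)" by (simp add: power_add)
  then have "d + i + 2 \<le> N" using i d2 mono3 by linarith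
  then have e1: "(2::nat) ^ (d + i + 2) \<le> 2 ^ N" by (rule power_increasing) auto
  have "4 * d * 2 ^ i \<le> 4 * 2 ^ d * 2 ^ i" using d by simp
  also have "\<dots> = 2 ^ (d + i + 2)" by (simp add: power_add)
  finally show "4 * d * 2 ^ i \<le> (2::nat) ^ (2 ^ (3*d+8))" using e1 unfolding N_def by linarith
  have "N < 2 ^ N" by (rule less_exp)
  then show "4 * i \<le> (2::nat) ^ (2 ^ (3*d+8))"
    using i mono3 \<open>(2::nat) ^ (d + 4) = 4 * 2 ^ (d + 2)\<close> unfolding N_def by linarith
qed

definition Qs :: "nat \<Rightarrow> pt set \<Rightarrow> pt set set" where
  "Qs k B = {S. S \<subseteq> B \<and> S \<noteq> {} \<and> aff_indep_psi k S \<and> card S < (k + 2) choose 2}"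

definition Cur :: "nat \<Rightarrow> pt set \<Rightarrow> pt set" where
  "Cur k S = (SOME C. (\<exists>e\<in>{1..k}. C \<in> curves e) \<and> (\<forall>p. \<not> aff_indep_psi k (insert p S) \<longrightarrow> p \<in> C))"

lemma Cur_prop:
  assumes "finite B" "S \<in> Qs k B"
  shows "(\<exists>e\<in>{1..k}. Cur k S \<in> curves e) \<and> (\<forall>p. \<not> aff_indep_psi k (insert p S) \<longrightarrow> p \<in> Cur k S)"
proof -
  have "finite S" using assms by (auto simp: Qs_def intro: finite_subset)
  then have "\<exists>C. (\<exists>e\<in>{1..k}. C \<in> curves e) \<and> (\<forall>p. \<not> aff_indep_psi k (insert p S) \<longrightarrow> p \<in> C)"
    using curve_exists[of S k] assms by (auto simp: Qs_def)
  then show ?thesis unfolding Cur_def by (rule someI_ex)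
qed

lemma bad_in_Cur:
  assumes finB: "finite B" and g: "gen d B" and p: "\<not> gen d (insert p B)"
  shows "\<exists>k\<in>{1..d}. \<exists>S\<in>Qs k B. p \<in> Cur k S"
proof -
  from p obtain k T where k: "k \<in> {1..d}" and T: "T \<subseteq> insert p B" "card T \<le> (k + 2) choose 2"
    and nT: "\<not> aff_indep_psi k T" unfolding gen_def by blast
  have finT: "finite T" using T finB finite_subset by auto
  have pT: "p \<in> T"
  proof (rule ccontr)
    assume "p \<notin> T"
    then have "T \<subseteq> B" using T by auto
    then show False using g k T nT unfolding gen_def by blast
  qed
  define S where "S = T - {p}"
  have TS: "T = insert p S" using pT by (auto simp: S_def)
  have SB: "S \<subseteq> B" using T by (auto simp: S_def)
  have "card T > 0" using pT finT card_gt_0_iff by blast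
  then have cS: "card S < (k + 2) choose 2" using T pT finT by (simp add: S_def)
  have indS: "aff_indep_psi k S" using g k SB cS unfolding gen_def by auto
  have Sne: "S \<noteq> {}" using nT TS indep_single[of k p] by auto
  have SQ: "S \<in> Qs k B" using SB Sne indS cS by (simp add: Qs_def)
  have "p \<in> Cur k S" using conjunct2[OF Cur_prop[OF finB SQ]] nT TS by blast
  then show ?thesis using k SQ by blast
qed



lemma extend:
  assumes reg: "regular d A" and finA: "finite A" and d1: "d \<ge> 1" and BA: "B \<subseteq> A"
    and g: "gen d B" and cB: "card B = i" and i: "i < (d + 2) choose 2"
  shows "real (card A) / 2 \<le> real (card {p \<in> A - B. gen d (insert p B)})"
proof -
  define N :: nat where "N = 2 ^ (3*d+8)"
  define a where "a = real (card A)"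
  define \<epsilon> :: real where "\<epsilon> = (1/2) ^ N"
  have finB: "finite B" using finA BA finite_subset by auto
  define Bad where "Bad = {p \<in> A - B. \<not> gen d (insert p B)}"
  define Good where "Good = {p \<in> A - B. gen d (insert p B)}"
  define X where "X k S = A \<inter> Cur k S" for k S
  have finQ: "finite (Qs k B)" for k
    by (rule finite_subset[of _ "Pow B"]) (use finB in \<open>auto simp: Qs_def\<close>)
  have cardQ: "real (card (Qs k B)) \<le> 2 ^ i" for k
  proof -
    have "card (Qs k B) \<le> card (Pow B)"
      by (rule card_mono) (use finB in \<open>auto simp: Qs_def\<close>)
    then show ?thesis using finB cB by (simp add: card_Pow)
  qed
  have eachX: "real (card (X k S)) \<le> \<epsilon> * a" if k: "k \<in> {1..d}" and S: "S \<in> Qs k B" for k S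
  proof -
    from Cur_prop[OF finB S] obtain e where e: "e \<in> {1..k}" "Cur k S \<in> curves e" by blast
    have "e \<in> {1..d}" using e k by auto
    from reg_curve[OF reg this e(2)] show ?thesis unfolding X_def \<epsilon>_def a_def N_def by simp
  qed
  have BadU: "Bad \<subseteq> (\<Union>k\<in>{1..d}. \<Union>S\<in>Qs k B. X k S)"
    using bad_in_Cur[OF finB g] by (auto simp: Bad_def X_def)
  have "card Bad \<le> card (\<Union>k\<in>{1..d}. \<Union>S\<in>Qs k B. X k S)"
    by (rule card_mono) (use BadU finA in \<open>auto simp: X_def\<close>)
  also have "\<dots> \<le> (\<Sum>k\<in>{1..d}. card (\<Union>S\<in>Qs k B. X k S))" by (rule card_UN_le) simp
  also have "\<dots> \<le> (\<Sum>k\<in>{1..d}. \<Sum>S\<in>Qs k B. card (X k S))"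
    by (rule sum_mono) (rule card_UN_le[OF finQ])
  finally have "real (card Bad) \<le> (\<Sum>k\<in>{1..d}. \<Sum>S\<in>Qs k B. real (card (X k S)))"
    by (metis (mono_tags, lifting) of_nat_le_iff of_nat_sum sum.cong)
  also have "\<dots> \<le> (\<Sum>k\<in>{1..d}. 2 ^ i * (\<epsilon> * a))"
  proof (rule sum_mono)
    fix k assume k: "k \<in> {1..d}"
    have "(\<Sum>S\<in>Qs k B. real (card (X k S))) \<le> real (card (Qs k B)) * (\<epsilon> * a)"
      by (rule sum_bounded_above) (use eachX k in auto)
    also have "\<dots> \<le> 2 ^ i * (\<epsilon> * a)"
      by (rule mult_right_mono[OF cardQ]) (simp add: \<epsilon>_def a_def)
    finally show "(\<Sum>S\<in>Qs k B. real (card (X k S))) \<le> 2 ^ i * (\<epsilon> * a)" .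
  qed
  also have "\<dots> = real d * 2 ^ i * \<epsilon> * a" by simp
  finally have cBad: "real (card Bad) \<le> real d * 2 ^ i * \<epsilon> * a" .
  have nb: "4 * d * 2 ^ i \<le> (2::nat) ^ N" "4 * i \<le> (2::nat) ^ N"
    using num_bounds[OF i] unfolding N_def by auto
  have nb1: "4 * real d * 2 ^ i \<le> 2 ^ N"
    using nb(1) by (metis (mono_tags, lifting) of_nat_le_iff of_nat_mult of_nat_numeral of_nat_power)
  have nb2: "4 * real i \<le> 2 ^ N"
    using nb(2) by (metis (mono_tags, lifting) of_nat_le_iff of_nat_mult of_nat_numeral of_nat_power)
  have alarge: "a > 2 ^ N" using A_large[OF reg finA d1] unfolding a_def N_def by simp
  have eps: "\<epsilon> * 2 ^ N = 1" unfolding \<epsilon>_def by (simp add: power_one_over)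
  have t1: "real d * 2 ^ i * \<epsilon> * a \<le> a / 4"
  proof -
    have "real d * 2 ^ i * \<epsilon> * a = (4 * real d * 2 ^ i) * (\<epsilon> * a) / 4" by simp
    also have "\<dots> \<le> 2 ^ N * (\<epsilon> * a) / 4"
      by (intro divide_right_mono mult_right_mono nb1) (auto simp: \<epsilon>_def a_def)
    also have "\<dots> = a / 4" using eps by (simp add: algebra_simps)
    finally show ?thesis .
  qed
  have t2: "real i \<le> a / 4" using nb2 alarge by simp
  have part: "card Good + card Bad = card (A - B)"
  proof -
    have "A - B = Good \<union> Bad" "Good \<inter> Bad = {}" by (auto simp: Good_def Bad_def)
    then show ?thesis using finA by (metis card_Un_disjoint finite_Diff finite_Un)
  qed
  have "card (A - B) = card A - i" using card_Diff_subset[OF finB BA] cB by simp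
  moreover have "i \<le> card A" using cB BA finA card_mono by blast
  ultimately have "real (card Good) + real (card Bad) = a - real i"
    using part unfolding a_def by (metis of_nat_add of_nat_diff)
  then have "real (card Good) \<ge> a / 2" using cBad t1 t2 by linarith
  then show ?thesis unfolding Good_def a_def .
qed



lemma G_bound:
  assumes reg: "regular d A" and finA: "finite A" and d: "d > 1"
  shows "i \<le> ((d + 2) choose 2) - 3 \<Longrightarrow>
    real (card {B. B \<subseteq> A \<and> card B = i \<and> gen d B}) \<ge> (real (card A) / 2) ^ i / fact i"
proof (induction i)
  case 0
  have "{B. B \<subseteq> A \<and> card B = 0 \<and> gen d B} = {{}}"
  proof -
    have "gen d {}" unfolding gen_def using indep_empty by auto
    moreover have "B = {}" if "B \<subseteq> A" "card B = 0" for B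
      using that finA by (metis card_0_eq finite_subset)
    ultimately show ?thesis by auto
  qed
  then show ?case by simp
next
  case (Suc i)
  define a where "a = real (card A)"
  define G where "G j = {B. B \<subseteq> A \<and> card B = j \<and> gen d B}" for j
  have finG: "finite (G j)" for j
    by (rule finite_subset[of _ "Pow A"]) (use finA in \<open>auto simp: G_def\<close>)
  have IH: "real (card (G i)) \<ge> (a / 2) ^ i / fact i" using Suc unfolding G_def a_def by simp
  have nd3: "(d + 2) choose 2 \<ge> 3" using d n_ge3 by simp
  have ilt: "i < (d + 2) choose 2" using Suc.prems nd3 by linarith
  define Ext where "Ext B = {p \<in> A - B. gen d (insert p B)}" for B
  define P where "P = Sigma (G i) Ext"
  have finE: "finite (Ext B)" for B using finA by (simp add: Ext_def)
  have "real (card P) = (\<Sum>B\<in>G i. real (card (Ext B)))"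
    unfolding P_def using card_SigmaI[OF finG[of i], of Ext] finE by simp
  also have "\<dots> \<ge> real (card (G i)) * (a / 2)"
  proof (rule sum_bounded_below)
    fix B assume "B \<in> G i"
    then show "a / 2 \<le> real (card (Ext B))"
      unfolding Ext_def a_def using extend[OF reg finA _ _ _ _ ilt] d by (auto simp: G_def)
  qed
  finally have P1: "real (card P) \<ge> real (card (G i)) * (a / 2)" .
  define f :: "pt set \<times> pt \<Rightarrow> pt set \<times> pt" where "f = (\<lambda>(B, p). (insert p B, p))"
  have inj: "inj_on f P"
  proof (rule inj_onI)
    fix x y assume x: "x \<in> P" and y: "y \<in> P" and fxy: "f x = f y"
    obtain B p where xp: "x = (B, p)" by (cases x) blast
    obtain B' p' where yp: "y = (B', p')" by (cases y) blast
    have "p \<notin> B" "p' \<notin> B'" using x y xp yp by (auto simp: P_def Ext_def)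
    moreover have "p = p'" "insert p B = insert p' B'" using fxy xp yp by (auto simp: f_def)
    ultimately have "B = B'" by (metis Diff_insert_absorb)
    then show "x = y" using xp yp \<open>p = p'\<close> by simp
  qed
  have img: "f ` P \<subseteq> Sigma (G (Suc i)) (\<lambda>B'. B')"
  proof
    fix z assume "z \<in> f ` P"
    then obtain B p where Bp: "(B, p) \<in> P" "z = (insert p B, p)" by (auto simp: f_def)
    then have B: "B \<subseteq> A" "card B = i" "gen d B" and p: "p \<in> A" "p \<notin> B" "gen d (insert p B)"
      by (auto simp: P_def G_def Ext_def)
    have "finite B" using B finA finite_subset by auto
    then have "card (insert p B) = Suc i" using B p by simp
    then show "z \<in> Sigma (G (Suc i)) (\<lambda>B'. B')" using Bp B p by (auto simp: G_def)
  qed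
  have finS: "finite (Sigma (G (Suc i)) (\<lambda>B'. B'))"
    using finG by (rule finite_SigmaI) (use finA in \<open>auto simp: G_def intro: finite_subset\<close>)
  have "card P = card (f ` P)" using card_image[OF inj] by simp
  also have "\<dots> \<le> card (Sigma (G (Suc i)) (\<lambda>B'. B'))" by (rule card_mono[OF finS img])
  also have "\<dots> = (\<Sum>B\<in>G (Suc i). card B)" by (rule card_SigmaI[OF finG]) (use finA in \<open>auto simp: G_def intro: finite_subset\<close>)
  also have "\<dots> = card (G (Suc i)) * Suc i" by (simp add: G_def)
  finally have P2: "real (card P) \<le> real (card (G (Suc i))) * real (Suc i)"
    by (metis of_nat_le_iff of_nat_mult)
  have a0: "a \<ge> 0" by (simp add: a_def)
  have "(a / 2) ^ i / fact i * (a / 2) \<le> real (card (G i)) * (a / 2)"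
    by (rule mult_right_mono[OF IH]) (simp add: a0)
  also have "\<dots> \<le> real (card (G (Suc i))) * real (Suc i)" using P1 P2 by linarith
  finally have "(a / 2) ^ Suc i / fact i \<le> real (card (G (Suc i))) * real (Suc i)"
    by (simp add: algebra_simps)
  then have "(a / 2) ^ Suc i / fact i / real (Suc i) \<le> real (card (G (Suc i)))"
    by (metis pos_divide_le_eq of_nat_0_less_iff zero_less_Suc)
  moreover have "(a / 2) ^ Suc i / fact (Suc i) = (a / 2) ^ Suc i / fact i / real (Suc i)"
    by (simp add: divide_divide_eq_left mult.commute)
  ultimately have "(a / 2) ^ Suc i / fact (Suc i) \<le> real (card (G (Suc i)))" by (simp only:)
  then show ?case unfolding G_def a_def .
qed



theorem lemma24:
  fixes d :: nat and A :: "(real \<times> real) set"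
  assumes "d > 1" and "finite A" and "regular d A"
  shows "real (card (Nfam3 d A {} UNIV))
           \<ge> 1 / fact (2 ^ (d + 3)) * real (card A) ^ (((d + 2) choose 2) - 3)"
proof -
  define m where "m = ((d + 2) choose 2) - 3"
  define a where "a = real (card A)"
  define G where "G = {B. B \<subseteq> A \<and> card B = m \<and> gen d B}"
  have N3: "Nfam3 d A {} UNIV = Nfam d A" by (auto simp: Nfam3_def)
  have GN: "G \<subseteq> Nfam d A" using gen_Nfam[OF assms(1,2)] by (auto simp: G_def m_def)
  have finN: "finite (Nfam d A)"
    by (rule finite_subset[of _ "Pow A"]) (use assms(2) in \<open>auto simp: Nfam_def\<close>)
  have "real (card G) \<le> real (card (Nfam d A))" using card_mono[OF finN GN] by simp
  moreover have "(a / 2) ^ m / fact m \<le> real (card G)"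
    using G_bound[OF assms(3,2,1), of m] unfolding G_def a_def m_def by simp
  moreover have "1 / fact (2 ^ (d + 3)) * a ^ m \<le> (a / 2) ^ m / fact m"
  proof -
    have "2 * m \<le> 2 ^ (d + 3)" using nd_bound[of d] unfolding m_def by linarith
    then have "fact (2 * m) \<le> (fact (2 ^ (d + 3)) :: nat)" by (rule fact_mono)
    then have "2 ^ m * fact m \<le> (fact (2 ^ (d + 3)) :: nat)" using fact_double[of m] by linarith
    then have "real (2 ^ m * fact m) \<le> real (fact (2 ^ (d + 3)))" by (rule of_nat_mono)
    then have F: "(2 ^ m * fact m :: real) \<le> fact (2 ^ (d + 3))"
      by (simp only: of_nat_mult of_nat_power of_nat_fact of_nat_numeral)
    have pos: "(0::real) < 2 ^ m * fact m" by simp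
    have a0: "a ^ m \<ge> 0" by (simp add: a_def)
    have "1 / fact (2 ^ (d + 3)) * a ^ m = a ^ m / fact (2 ^ (d + 3))" by simp
    also have "\<dots> \<le> a ^ m / (2 ^ m * fact m)"
      by (rule divide_left_mono[OF F a0]) (use pos in simp)
    also have "\<dots> = (a / 2) ^ m / fact m" by (simp add: power_divide)
    finally show ?thesis .
  qed
  ultimately show ?thesis unfolding N3 a_def m_def by linarith
qed


end
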